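(* Let $G$ be a finite connected graph with node set $V$, let $U\subseteq V$, and let $S_U$ be the set of nodes $v$ for which no $x\in U$ satisfies $e(v)=d(v,x)+e(x)$. Then any node $v\in S_U$ with $e(v)=\min_{u\in S_U}e(u)$ is its own unique tight upper certificate: the only node $x\in V$ with $e(v)=d(v,x)+e(x)$ is $x=v$.
   Context: $d$ is the shortest-path distance and $e(u)=\max_{w\in V}d(u,w)$. A node $x$ is a tight upper certificate for $v$ if $e(v)=d(v,x)+e(x)$. *)

theory Defs
  imports Main
begin

definition simple_graph :: "'a set \<Rightarrow> ('a \<Rightarrow> 'a \<Rightarrow> bool) \<Rightarrow> bool" where
  "simple_graph V E \<longleftrightarrow> finite V \<and> (\<forall>u w. E u w \<longrightarrow> u \<in> V \<and> w \<in> V)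
     \<and> (\<forall>u w. E u w \<longrightarrow> E w u) \<and> (\<forall>u. \<not> E u u)"

definition is_walk :: "'a set \<Rightarrow> ('a \<Rightarrow> 'a \<Rightarrow> bool) \<Rightarrow> 'a list \<Rightarrow> bool" where
  "is_walk V E xs \<longleftrightarrow> xs \<noteq> [] \<and> set xs \<subseteq> V \<and>
     (\<forall>i. Suc i < length xs \<longrightarrow> E (xs ! i) (xs ! Suc i))"

definition connected_graph :: "'a set \<Rightarrow> ('a \<Rightarrow> 'a \<Rightarrow> bool) \<Rightarrow> bool" where
  "connected_graph V E \<longleftrightarrow> V \<noteq> {} \<and>
     (\<forall>u\<in>V. \<forall>w\<in>V. \<exists>xs. is_walk V E xs \<and> hd xs = u \<and> last xs = w)"

definition gdist :: "'a set \<Rightarrow> ('a \<Rightarrow> 'a \<Rightarrow> bool) \<Rightarrow> 'a \<Rightarrow> 'a \<Rightarrow> nat" where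
  "gdist V E u w = (LEAST n. \<exists>xs. is_walk V E xs \<and> hd xs = u \<and> last xs = w \<and> length xs = Suc n)"

definition ecc :: "'a set \<Rightarrow> ('a \<Rightarrow> 'a \<Rightarrow> bool) \<Rightarrow> 'a \<Rightarrow> nat" where
  "ecc V E u = Max (gdist V E u ` V)"

definition tight_cert :: "'a set \<Rightarrow> ('a \<Rightarrow> 'a \<Rightarrow> bool) \<Rightarrow> 'a \<Rightarrow> 'a \<Rightarrow> bool" where
  "tight_cert V E v x \<longleftrightarrow> ecc V E v = gdist V E v x + ecc V E x"

end

theory Submission
  imports Defs
begin

lemma walk_append:
  assumes "is_walk V E xs" "is_walk V E ys" "last xs = hd ys"
  shows "is_walk V E (xs @ tl ys)"
  unfolding is_walk_def
proof (intro conjI allI impI)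
  show "xs @ tl ys \<noteq> []" using assms(1) by (simp add: is_walk_def)
  show "set (xs @ tl ys) \<subseteq> V" using assms(1,2) by (auto simp: is_walk_def dest: list.set_sel(2))
next
  fix i assume i: "Suc i < length (xs @ tl ys)"
  have xw: "\<And>i. Suc i < length xs \<Longrightarrow> E (xs ! i) (xs ! Suc i)" and xne: "xs \<noteq> []"
    using assms(1) by (auto simp: is_walk_def)
  have yw: "\<And>i. Suc i < length ys \<Longrightarrow> E (ys ! i) (ys ! Suc i)" and yne: "ys \<noteq> []"
    using assms(2) by (auto simp: is_walk_def)
  consider "Suc i < length xs" | "Suc i = length xs" | "Suc i > length xs" by linarith
  then show "E ((xs @ tl ys) ! i) ((xs @ tl ys) ! Suc i)"
  proof cases
    case 1 then show ?thesis using xw by (simp add: nth_append)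
  next
    case 2
    have "i = length xs - 1" using 2 by simp
    then have "xs ! i = last xs" using xne by (simp add: last_conv_nth)
    also have "\<dots> = ys ! 0" using assms(3) yne by (simp add: hd_conv_nth)
    finally have a: "(xs @ tl ys) ! i = ys ! 0" using 2 by (simp add: nth_append)
    have "length ys \<ge> 2" using i 2 by simp
    have b: "(xs @ tl ys) ! Suc i = ys ! 1" using 2 yne \<open>length ys \<ge> 2\<close> by (simp add: nth_append nth_tl)
    show ?thesis using a b yw[of 0] \<open>length ys \<ge> 2\<close> by simp
  next
    case 3
    then obtain k where k: "i = length xs + k" by (metis less_Suc_eq_le le_Suc_ex Suc_leI)
    then show ?thesis using i yw[of "Suc k"] yne
      by (simp add: nth_append nth_tl)
  qed
qed

lemma gdist_wit:
  assumes "connected_graph V E" "u \<in> V" "w \<in> V"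
  shows "\<exists>xs. is_walk V E xs \<and> hd xs = u \<and> last xs = w \<and> length xs = Suc (gdist V E u w)"
proof -
  obtain xs where xs: "is_walk V E xs" "hd xs = u" "last xs = w"
    using assms unfolding connected_graph_def by blast
  then have "\<exists>n. \<exists>xs. is_walk V E xs \<and> hd xs = u \<and> last xs = w \<and> length xs = Suc n"
    by (metis is_walk_def length_greater_0_conv Suc_pred)
  from LeastI_ex[OF this] show ?thesis unfolding gdist_def .
qed

lemma gdist_le:
  assumes "is_walk V E xs" "hd xs = u" "last xs = w"
  shows "gdist V E u w \<le> length xs - 1"
proof -
  have "length xs = Suc (length xs - 1)" using assms(1) by (simp add: is_walk_def)
  then show ?thesis unfolding gdist_def using assms by (intro Least_le) blast
qed

lemma gdist_tri:
  assumes "connected_graph V E" "u \<in> V" "y \<in> V" "w \<in> V"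
  shows "gdist V E u w \<le> gdist V E u y + gdist V E y w"
proof -
  obtain xs where xs: "is_walk V E xs" "hd xs = u" "last xs = y" "length xs = Suc (gdist V E u y)"
    using gdist_wit[OF assms(1,2,3)] by blast
  obtain ys where ys: "is_walk V E ys" "hd ys = y" "last ys = w" "length ys = Suc (gdist V E y w)"
    using gdist_wit[OF assms(1,3,4)] by blast
  have W: "is_walk V E (xs @ tl ys)" using walk_append[OF xs(1) ys(1)] xs(3) ys(2) by simp
  have "hd (xs @ tl ys) = u" using xs by (cases xs) auto
  moreover have "last (xs @ tl ys) = w"
  proof (cases "tl ys = []")
    case True
    then have "ys = [hd ys]" using ys(1) unfolding is_walk_def by (cases ys) auto
    then show ?thesis using True xs ys by (metis append_Nil2 last_ConsL)
  next
    case False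
    then show ?thesis using ys by (metis last_appendR last_tl)
  qed
  ultimately have "gdist V E u w \<le> length (xs @ tl ys) - 1" using gdist_le[OF W] by blast
  then show ?thesis using xs ys by simp
qed

lemma gdist_refl:
  assumes "u \<in> V" shows "gdist V E u u = 0"
proof -
  have "is_walk V E [u]" using assms by (simp add: is_walk_def)
  then show ?thesis using gdist_le[of V E "[u]" u u] by simp
qed

lemma gdist_zero:
  assumes "connected_graph V E" "u \<in> V" "w \<in> V" "gdist V E u w = 0"
  shows "u = w"
proof -
  obtain xs where xs: "is_walk V E xs" "hd xs = u" "last xs = w" "length xs = Suc 0"
    using gdist_wit[OF assms(1,2,3)] assms(4) by auto
  then obtain a where "xs = [a]" by (cases xs) auto
  then show ?thesis using xs by simp
qed

lemma ecc_ge: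
  assumes "simple_graph V E" "w \<in> V"
  shows "gdist V E u w \<le> ecc V E u"
  using assms unfolding ecc_def simple_graph_def by (intro Max_ge) auto

lemma ecc_att:
  assumes "simple_graph V E" "connected_graph V E"
  shows "\<exists>w\<in>V. ecc V E u = gdist V E u w"
proof -
  have "ecc V E u \<in> gdist V E u ` V"
    using assms unfolding ecc_def simple_graph_def connected_graph_def by (intro Max_in) auto
  then show ?thesis by auto
qed

lemma ecc_upper:
  assumes "simple_graph V E" "connected_graph V E" "v \<in> V" "y \<in> V"
  shows "ecc V E v \<le> gdist V E v y + ecc V E y"
proof -
  obtain w where w: "w \<in> V" "ecc V E v = gdist V E v w" using ecc_att[OF assms(1,2)] by blast
  have "gdist V E v w \<le> gdist V E v y + gdist V E y w" by (rule gdist_tri[OF assms(2,3,4) w(1)])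
  also have "\<dots> \<le> gdist V E v y + ecc V E y" using ecc_ge[OF assms(1) w(1)] by simp
  finally show ?thesis using w(2) by linarith
qed

theorem lemma1:
  fixes V U :: "'a set" and E :: "'a \<Rightarrow> 'a \<Rightarrow> bool" and S :: "'a set" and v :: 'a
  assumes "simple_graph V E" and "connected_graph V E" and "U \<subseteq> V"
    and "S = {w \<in> V. \<not> (\<exists>x\<in>U. tight_cert V E w x)}"
    and "v \<in> S" and "ecc V E v = Min (ecc V E ` S)"
  shows "{x \<in> V. tight_cert V E v x} = {v}"
proof -
  have vV: "v \<in> V" using assms(4,5) by simp
  have finS: "finite S" using assms(1,4) by (simp add: simple_graph_def)
  have "x = v" if xV: "x \<in> V" and t: "tight_cert V E v x" for x
  proof (rule ccontr)
    assume ne: "x \<noteq> v"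
    have "gdist V E v x \<noteq> 0" using gdist_zero[OF assms(2) vV xV] ne by auto
    then have lt: "ecc V E x < ecc V E v" using t by (simp add: tight_cert_def)
    show False
    proof (cases "x \<in> S")
      case True
      then have "Min (ecc V E ` S) \<le> ecc V E x" using finS by simp
      then show False using lt assms(6) by simp
    next
      case False
      then obtain y where y: "y \<in> U" "tight_cert V E x y" using assms(4) xV by auto
      have yV: "y \<in> V" using y assms(3) by auto
      have "gdist V E v y + ecc V E y \<le> gdist V E v x + gdist V E x y + ecc V E y"
        using gdist_tri[OF assms(2) vV xV yV] by simp
      also have "\<dots> = ecc V E v" using t y(2) by (simp add: tight_cert_def)
      finally have "tight_cert V E v y"
        using ecc_upper[OF assms(1,2) vV yV] by (simp add: tight_cert_def)
      then show False using assms(4,5) y(1) by auto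
    qed
  qed
  moreover have "tight_cert V E v v" using gdist_refl[OF vV] by (simp add: tight_cert_def)
  ultimately show ?thesis using vV by auto
qed

end
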